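(* Let $\alpha>1$, let $\Omega\subset\mathbb{D}$ be a measurable set, and let $F\in A^1_\alpha(\mathbb{D})$. Then for every $0<R<1$, $$\|F\cdot\chi_\Omega\|_{A^1_\alpha(\mathbb{D})}\le \frac{2\,\rho_{\mathbb{D}}(\Omega,R)}{C^\alpha(R)}\,\|F\|_{A^1_\alpha(\mathbb{D})},$$ where $C^\alpha(R)=\frac{1}{\alpha-1}\left(1-(1-R^2)^{\alpha-1}\right)$ and $\rho_{\mathbb{D}}(\Omega,R)=\sup_{z\in\mathbb{D}}|\Omega\cap B_{\varrho_{\mathbb{D}}}(z,R)|_{\mathbb{D}}$.
   Context: $\mathbb{D}$ is the open unit disc in $\mathbb{C}$ and $dz$ denotes Lebesgue area measure. The pseudohyperbolic metric is $\varrho_{\mathbb{D}}(z_1,z_2)=\left|\frac{z_1-z_2}{1-z_1\overline{z_2}}\right|$, and for $z\in\mathbb{D}$, $0<R<1$, the pseudohyperbolic ball is $B_{\varrho_{\mathbb{D}}}(z,R)=\{w\in\mathbb{D}:\varrho_{\mathbb{D}}(w,z)<R\}$. The hyperbolic measure of a measurable set $E\subset\mathbb{D}$ is $|E|_{\mathbb{D}}=\int_E(1-|z|^2)^{-2}\,dz$. For $1\le p<\infty$, the weighted Bergman space $A^p_\alpha(\mathbb{D})$ is the space of analytic functions $F$ on $\mathbb{D}$ with $$\|F\|^p_{A^p_\alpha(\mathbb{D})}=\frac{1}{\pi}\int_{\mathbb{D}}|F(z)|^p(1-|z|^2)^{\alpha-2}\,dz<\infty,$$ and for a (not necessarily analytic)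 measurable function $G$ on $\mathbb{D}$ the same expression defines $\|G\|_{A^p_\alpha(\mathbb{D})}$; in particular $\|F\chi_\Omega\|_{A^1_\alpha(\mathbb{D})}=\frac1\pi\int_\Omega|F(z)|(1-|z|^2)^{\alpha-2}dz$. *)

theory Defs
  imports "HOL-Complex_Analysis.Complex_Analysis"
begin

definition pseudohyp :: "complex \<Rightarrow> complex \<Rightarrow> real" where
  "pseudohyp z1 z2 = cmod ((z1 - z2) / (1 - z1 * cnj z2))"

definition phball :: "complex \<Rightarrow> real \<Rightarrow> complex set" where
  "phball z R = {w \<in> ball 0 1. pseudohyp w z < R}"

definition hyp_measure :: "complex set \<Rightarrow> ennreal" where
  "hyp_measure E = (\<integral>\<^sup>+ z. ennreal ((1 - (cmod z)\<^sup>2) powr (-2)) * indicator E z \<partial>lebesgue)"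

definition bergman_norm_p :: "real \<Rightarrow> real \<Rightarrow> (complex \<Rightarrow> complex) \<Rightarrow> ennreal" where
  "bergman_norm_p p \<alpha> G = ennreal (1 / pi) *
     (\<integral>\<^sup>+ z. ennreal ((cmod (G z)) powr p * (1 - (cmod z)\<^sup>2) powr (\<alpha> - 2))
        * indicator (ball 0 1) z \<partial>lebesgue)"

definition bergman_space :: "real \<Rightarrow> real \<Rightarrow> (complex \<Rightarrow> complex) set" where
  "bergman_space p \<alpha> = {F. F holomorphic_on ball 0 1 \<and> bergman_norm_p p \<alpha> F < \<infinity>}"

definition C_alpha :: "real \<Rightarrow> real \<Rightarrow> real" where
  "C_alpha \<alpha> R = (1 / (\<alpha> - 1)) * (1 - (1 - R\<^sup>2) powr (\<alpha> - 1))"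

definition rho_D :: "complex set \<Rightarrow> real \<Rightarrow> ennreal" where
  "rho_D \<Omega> R = (SUP z\<in>ball 0 1. hyp_measure (\<Omega> \<inter> phball z R))"

end

theory Submission
  imports Defs "HOL-Real_Asymp.Real_Asymp"
begin


definition toR2 :: "complex \<Rightarrow> real^2" where
  "toR2 z = (\<chi> i. if i = 1 then Re z else Im z)"
definition ofR2 :: "real^2 \<Rightarrow> complex" where
  "ofR2 p = Complex (p$1) (p$2)"

lemma toR2_1[simp]: "toR2 z $ 1 = Re z" and toR2_2[simp]: "toR2 z $ 2 = Im z"
  by (auto simp: toR2_def)

lemma ofR2_toR2[simp]: "ofR2 (toR2 z) = z"
  by (simp add: ofR2_def)

lemma toR2_ofR2[simp]: "toR2 (ofR2 p) = p"
  by (simp add: vec_eq_iff forall_2 ofR2_def)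

lemma linear_toR2: "linear toR2"
  by (rule linearI) (auto simp: vec_eq_iff forall_2)

lemma linear_ofR2: "linear ofR2"
  by (rule linearI) (auto simp: ofR2_def complex_eq_iff)

lemma continuous_toR2[continuous_intros]: "continuous_on S toR2"
  by (simp add: linear_continuous_on linear_toR2 linear_linear)

lemma continuous_ofR2[continuous_intros]: "continuous_on S ofR2"
  by (simp add: linear_continuous_on linear_ofR2 linear_linear)

lemma toR2_meas[measurable]: "toR2 \<in> borel_measurable borel"
  by (intro borel_measurable_continuous_onI continuous_toR2)

lemma ofR2_meas[measurable]: "ofR2 \<in> borel_measurable borel"
  by (intro borel_measurable_continuous_onI continuous_ofR2)

lemma prod_Basis_R2: "(\<Prod>b\<in>(Basis::(real^2) set). f b) = f (axis 1 1) * f (axis 2 1)"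
proof -
  have B: "(Basis::(real^2) set) = {axis 1 1, axis 2 1}"
    by (auto simp: Basis_vec_def UNIV_2)
  have ne: "axis 1 (1::real) \<noteq> (axis 2 1 :: real^2)"
    by (simp add: axis_eq_axis)
  show ?thesis unfolding B using ne by (simp add: prod.insert)
qed

lemma prod_Basis_C: "(\<Prod>b\<in>(Basis::complex set). f b) = f 1 * f \<i>"
  by (simp add: Basis_complex_def)

lemma lborel_R2: "(lborel :: (real^2) measure) = distr (lborel::complex measure) borel toR2"
proof (rule lborel_eqI)
  fix l u :: "real^2" assume le: "\<And>b. b \<in> Basis \<Longrightarrow> l \<bullet> b \<le> u \<bullet> b"
  have le1: "l$1 \<le> u$1" and le2: "l$2 \<le> u$2"
    using le[of "axis 1 1"] le[of "axis 2 1"] by (auto simp: Basis_vec_def cart_eq_inner_axis)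
  have "toR2 -` box l u = box (ofR2 l) (ofR2 u)"
    by (auto simp: in_box_complex_iff mem_box_cart forall_2 ofR2_def)
  then have "emeasure (distr lborel borel toR2) (box l u) = emeasure lborel (box (ofR2 l) (ofR2 u))"
    by (simp add: emeasure_distr)
  also have "\<dots> = (u$1 - l$1) * (u$2 - l$2)"
    using le1 le2 by (simp add: emeasure_lborel_box_eq prod_Basis_C Basis_complex_def ofR2_def inner_complex_def ennreal_mult)
  also have "\<dots> = (\<Prod>b\<in>Basis. (u - l) \<bullet> b)"
    by (simp add: prod_Basis_R2 cart_eq_inner_axis inner_diff_left)
  finally show "emeasure (distr lborel borel toR2) (box l u) = (\<Prod>b\<in>Basis. (u - l) \<bullet> b)" .
qed simp

lemma nn_integral_C_R2:
  assumes [measurable]: "f \<in> borel_measurable borel"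
  shows "(\<integral>\<^sup>+z. f z \<partial>(lborel::complex measure)) = (\<integral>\<^sup>+p. f (ofR2 p) \<partial>lborel)"
  by (subst lborel_R2) (simp add: nn_integral_distr)

lemma Complex_meas[measurable]: "(\<lambda>(x,y). Complex x y) \<in> borel_measurable (lborel \<Otimes>\<^sub>M lborel)"
proof -
  have "(\<lambda>p::real\<times>real. of_real (fst p) + \<i> * of_real (snd p)) \<in> borel_measurable borel"
    by (intro borel_measurable_continuous_onI continuous_intros)
  then have "(\<lambda>p::real\<times>real. Complex (fst p) (snd p)) \<in> borel_measurable borel"
    by (simp add: Complex_eq)
  then show ?thesis by (simp add: lborel_prod case_prod_beta')
qed

lemma lborel_C_prod: "(lborel :: complex measure) = distr (lborel \<Otimes>\<^sub>M lborel) borel (\<lambda>(x,y). Complex x y)"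
proof (rule lborel_eqI)
  fix l u :: complex assume le: "\<And>b. b \<in> Basis \<Longrightarrow> l \<bullet> b \<le> u \<bullet> b"
  have le1: "Re l \<le> Re u" and le2: "Im l \<le> Im u"
    using le[of 1] le[of \<i>] by (auto simp: Basis_complex_def inner_complex_def)
  have "(\<lambda>(x,y). Complex x y) -` box l u \<inter> space (lborel \<Otimes>\<^sub>M lborel) = {Re l<..<Re u} \<times> {Im l<..<Im u}"
    by (auto simp: in_box_complex_iff space_pair_measure)
  then have "emeasure (distr (lborel \<Otimes>\<^sub>M lborel) borel (\<lambda>(x,y). Complex x y)) (box l u) = 
     emeasure (lborel \<Otimes>\<^sub>M lborel) ({Re l<..<Re u} \<times> {Im l<..<Im u})"
    by (subst emeasure_distr) auto
  also have "\<dots> = (Re u - Re l) * (Im u - Im l)"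
    using le1 le2 by (simp add: lborel.emeasure_pair_measure_Times ennreal_mult)
  also have "\<dots> = (\<Prod>b\<in>Basis. (u - l) \<bullet> b)"
    by (simp add: prod_Basis_C inner_complex_def)
  finally show "emeasure (distr (lborel \<Otimes>\<^sub>M lborel) borel (\<lambda>(x,y). Complex x y)) (box l u) = (\<Prod>b\<in>Basis. (u - l) \<bullet> b)" .
qed simp

lemma nn_integral_C_Fubini:
  assumes [measurable]: "f \<in> borel_measurable borel"
  shows "(\<integral>\<^sup>+z. f z \<partial>(lborel::complex measure)) = (\<integral>\<^sup>+y. (\<integral>\<^sup>+x. f (Complex x y) \<partial>lborel) \<partial>lborel)"
proof -
  have "(\<integral>\<^sup>+z. f z \<partial>(lborel::complex measure)) = (\<integral>\<^sup>+p. f (Complex (fst p) (snd p)) \<partial>(lborel \<Otimes>\<^sub>M lborel))"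
    using Complex_meas by (subst lborel_C_prod) (simp add: nn_integral_distr case_prod_beta' del: Complex_meas)
  also have "\<dots> = (\<integral>\<^sup>+y. (\<integral>\<^sup>+x. f (Complex x y) \<partial>lborel) \<partial>lborel)"
    by (subst lborel_pair.nn_integral_snd[symmetric]) auto
  finally show ?thesis .
qed




lemma det_toR2_mult: "det (matrix (toR2 \<circ> (\<lambda>h. d * h) \<circ> ofR2)) = (cmod d)^2"
proof -
  have a1: "ofR2 (axis 1 1) = 1" by (simp add: ofR2_def axis_def complex_eq_iff)
  have a2: "ofR2 (axis 2 1) = \<i>" by (simp add: ofR2_def axis_def complex_eq_iff)
  have "det (matrix (toR2 \<circ> (\<lambda>h. d * h) \<circ> ofR2)) = (Re d)^2 + (Im d)^2"
    by (simp add: det_2 matrix_def a1 a2 power2_eq_square)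
  then show ?thesis using cmod_power2[of d] by simp
qed

lemma cov_C:
  fixes g g' :: "complex \<Rightarrow> complex" and f :: "complex \<Rightarrow> real" and Q :: "complex set"
  assumes Q: "open Q" and gQ: "open (g ` Q)" and inj: "inj_on g Q"
    and der: "\<And>w. w \<in> Q \<Longrightarrow> (g has_field_derivative g' w) (at w)"
    and fm[measurable]: "f \<in> borel_measurable borel" and fnn: "\<And>u. 0 \<le> f u"
    and lm[measurable]: "(\<lambda>w. ennreal (f (g w) * (cmod (g' w))^2) * indicator Q w) \<in> borel_measurable borel"
  shows "(\<integral>\<^sup>+w. ennreal (f (g w) * (cmod (g' w))^2) * indicator Q w \<partial>lborel)
          \<le> (\<integral>\<^sup>+u. ennreal (f u) * indicator (g ` Q) u \<partial>lborel)"
proof (cases "(\<integral>\<^sup>+u. ennreal (f u) * indicator (g ` Q) u \<partial>lborel) = \<infinity>")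
  case True
  then show ?thesis by simp
next
  case False
  define S where "S = ofR2 -` Q"
  define G where "G = toR2 \<circ> g \<circ> ofR2"
  define fR where "fR = f \<circ> ofR2"
  define G' where "G' x = toR2 \<circ> (\<lambda>h. g' (ofR2 x) * h) \<circ> ofR2" for x
  have SQ: "p \<in> S \<longleftrightarrow> ofR2 p \<in> Q" for p by (simp add: S_def)
  have GS: "G ` S = ofR2 -` (g ` Q)"
  proof (intro equalityI subsetI)
    fix p assume "p \<in> G ` S" then show "p \<in> ofR2 -` (g ` Q)" by (auto simp: G_def SQ)
  next
    fix p assume "p \<in> ofR2 -` (g ` Q)"
    then obtain w where "ofR2 p = g w" "w \<in> Q" by auto
    then have "p = G (toR2 w)" "toR2 w \<in> S"
      by (auto simp: G_def SQ) (metis toR2_ofR2)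
    then show "p \<in> G ` S" by blast
  qed
  have openS: "open S" unfolding S_def
    by (rule continuous_open_vimage[OF Q]) (metis continuous_ofR2 continuous_on_eq_continuous_at open_UNIV UNIV_I)
  have openGS: "open (G ` S)" unfolding GS
    by (rule continuous_open_vimage[OF gQ]) (metis continuous_ofR2 continuous_on_eq_continuous_at open_UNIV UNIV_I)
  have [measurable]: "G ` S \<in> sets borel" using openGS by auto
  have [measurable]: "S \<in> sets borel" using openS by auto
  have [measurable]: "fR \<in> borel_measurable borel" unfolding fR_def by measurable
  have RHS: "(\<integral>\<^sup>+u. ennreal (f u) * indicator (g ` Q) u \<partial>lborel) = (\<integral>\<^sup>+p. ennreal (fR p) * indicator (G ` S) p \<partial>lborel)"
  proof -
    have [measurable]: "g ` Q \<in> sets borel" using gQ by auto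
    show ?thesis by (subst nn_integral_C_R2) (measurable, auto simp: GS fR_def indicator_def)
  qed
  obtain r where r: "(\<integral>\<^sup>+p. ennreal (fR p) * indicator (G ` S) p \<partial>lborel) = ennreal r" "0 \<le> r"
    using False RHS by (cases "(\<integral>\<^sup>+p. ennreal (fR p) * indicator (G ` S) p \<partial>lborel)") auto
  have "((\<lambda>p. indicator (G ` S) p * fR p) has_integral r) UNIV"
  proof (rule nn_integral_has_integral)
    have "(\<integral>\<^sup>+p. ennreal (indicator (G ` S) p * fR p) \<partial>lborel) = (\<integral>\<^sup>+p. ennreal (fR p) * indicator (G ` S) p \<partial>lborel)"
      by (intro nn_integral_cong) (auto simp: indicator_def)
    then show "(\<integral>\<^sup>+p. ennreal (indicator (G ` S) p * fR p) \<partial>lborel) = ennreal r" using r by simp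
  qed (use fnn r(2) in \<open>simp_all add: fR_def\<close>)
  moreover have "(\<lambda>p. indicator (G ` S) p * fR p) = (\<lambda>p. if p \<in> G ` S then fR p else 0)"
    by (auto simp: indicator_def fun_eq_iff)
  ultimately have "(fR has_integral r) (G ` S)"
    using has_integral_restrict_UNIV[of "G ` S" fR r] by simp
  then have fRi: "fR absolutely_integrable_on (G ` S)" "integral (G ` S) fR = r"
    by (auto intro!: nonnegative_absolutely_integrable_1 simp: fR_def fnn integrable_on_def integral_unique)
  have v1: "(\<lambda>p. vec (fR p) :: real^1) absolutely_integrable_on (G ` S)"
    using fRi by (simp add: absolutely_integrable_on_1_iff)
  have v2: "integral (G ` S) (\<lambda>p. vec (fR p) :: real^1) = vec r"
    using fRi by (simp add: integral_on_1_eq)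
  have der': "(G has_derivative G' x) (at x within S)" if "x \<in> S" for x
  proof -
    have "(g has_derivative (\<lambda>h. g' (ofR2 x) * h)) (at (ofR2 x))"
      using der[of "ofR2 x"] that by (simp add: SQ has_field_derivative_def)
    then have "((g \<circ> ofR2) has_derivative ((\<lambda>h. g' (ofR2 x) * h) \<circ> ofR2)) (at x)"
      by (rule diff_chain_at[OF linear_imp_has_derivative[OF linear_ofR2]])
    then have "((toR2 \<circ> (g \<circ> ofR2)) has_derivative (toR2 \<circ> ((\<lambda>h. g' (ofR2 x) * h) \<circ> ofR2))) (at x)"
      by (rule diff_chain_at[OF _ linear_imp_has_derivative[OF linear_toR2]])
    then show ?thesis
      by (auto simp: G_def G'_def o_assoc intro: has_derivative_at_withinI)
  qed
  have inj': "inj_on G S"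
  proof (rule inj_onI)
    fix x y assume "x \<in> S" "y \<in> S" "G x = G y"
    then have "ofR2 (G x) = ofR2 (G y)" by simp
    then have "g (ofR2 x) = g (ofR2 y)" by (simp add: G_def)
    then have "ofR2 x = ofR2 y" using inj \<open>x \<in> S\<close> \<open>y \<in> S\<close> by (auto simp: SQ inj_on_def)
    then show "x = y" by (metis toR2_ofR2)
  qed
  have Sleb: "S \<in> sets lebesgue" using openS by auto
  from has_absolute_integral_change_of_variables[OF Sleb der' inj', of "\<lambda>p. vec (fR p)" "vec r"] v1 v2
  have cv: "(\<lambda>x. \<bar>det (matrix (G' x))\<bar> *\<^sub>R vec (fR (G x)) :: real^1) absolutely_integrable_on S"
     "integral S (\<lambda>x. \<bar>det (matrix (G' x))\<bar> *\<^sub>R vec (fR (G x)) :: real^1) = vec r"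
    by auto
  define h where "h = (\<lambda>x. \<bar>det (matrix (G' x))\<bar> * fR (G x))"
  have h1: "h absolutely_integrable_on S"
    using cv(1) by (simp add: absolutely_integrable_on_1_iff h_def)
  have h2: "integral S h = r"
    using cv(2) by (simp add: integral_on_1_eq h_def vec_eq_iff)
  have "(h has_integral r) S"
    using h1 h2 set_lebesgue_integral_eq_integral(1) by (metis has_integral_integral)
  then have hn: "(\<integral>\<^sup>+p. ennreal (h p) * indicator S p \<partial>lborel) = ennreal r"
    by (intro nn_integral_has_integral_lebesgue') (auto simp: h_def fR_def fnn)
  have LHS: "(\<integral>\<^sup>+w. ennreal (f (g w) * (cmod (g' w))^2) * indicator Q w \<partial>lborel)
      = (\<integral>\<^sup>+p. ennreal (f (g (ofR2 p)) * (cmod (g' (ofR2 p)))^2) * indicator Q (ofR2 p) \<partial>lborel)"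
    by (rule nn_integral_C_R2) measurable
  also have "\<dots> = (\<integral>\<^sup>+p. ennreal (h p) * indicator S p \<partial>lborel)"
    by (intro nn_integral_cong) (auto simp: h_def G'_def det_toR2_mult fR_def G_def SQ indicator_def, simp add: mult.commute)
  finally show ?thesis using hn r RHS by simp
qed




lemma circle_mean:
  fixes H :: "complex \<Rightarrow> complex"
  assumes H: "H holomorphic_on ball 0 1" and r: "0 < r" "r < 1"
  shows "ennreal (cmod (H 0)) \<le> (\<integral>\<^sup>+x. ennreal (cmod (H (of_real r * exp (2 * of_real pi * \<i> * of_real x)))) * indicator {0<..<1} x \<partial>lborel)"
proof -
  let ?c = "circlepath 0 r"
  have Hc: "H holomorphic_on cball 0 r" by (rule holomorphic_on_subset[OF H]) (use r in auto)
  have "((\<lambda>u. H u/(u-0)) has_contour_integral (2 * of_real pi * \<i> * H 0)) ?c"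
    by (rule Cauchy_integral_circlepath_simple[OF Hc]) (use r in auto)
  then have "((\<lambda>x. H (?c x) / (?c x - 0) * vector_derivative ?c (at x)) has_integral (2 * of_real pi * \<i> * H 0)) {0..1}"
    by (simp add: has_contour_integral)
  then have "((\<lambda>x. (2 * of_real pi * \<i>) * H (?c x)) has_integral (2 * of_real pi * \<i>) * H 0) {0..1}"
  proof (rule has_integral_eq[rotated])
    fix x :: real assume "x \<in> {0..1}"
    then show "H (?c x) / (?c x - 0) * vector_derivative ?c (at x) = (2 * of_real pi * \<i>) * H (?c x)"
      using r by (simp only: vector_derivative_circlepath) (simp add: circlepath)
  qed
  then have I0: "((\<lambda>x. (2 * of_real pi * \<i>) * H (?c x)) has_integral (2 * of_real pi * \<i>) * H 0) {0..1}" .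
  obtain k :: complex where kdef: "k = 2 * of_real pi * \<i>" by blast
  have k0: "k \<noteq> 0" by (simp add: kdef)
  have kk: "inverse k * (k * w) = w" for w using k0 by (simp add: mult.assoc[symmetric])
  have "((\<lambda>x. inverse k * (k * H (?c x))) has_integral inverse k * (k * H 0)) {0..1}"
    using I0 unfolding kdef[symmetric] by (rule has_integral_mult_right)
  then have I: "((\<lambda>x. H (?c x)) has_integral H 0) {0..1}"
    unfolding kk .
  have cont: "continuous_on {0..1} (\<lambda>x. H (?c x))"
  proof (rule continuous_on_compose2[OF holomorphic_on_imp_continuous_on[OF H]])
    show "continuous_on {0..1} ?c" using path_circlepath path_def by blast
    show "?c ` {0..1} \<subseteq> ball 0 1" using r path_image_circlepath[of 0 r] unfolding path_image_def by auto
  qed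
  have ni: "(\<lambda>x. cmod (H (?c x))) integrable_on {0..1}"
    by (intro integrable_continuous_interval continuous_intros cont)
  have "cmod (H 0) \<le> integral {0..1} (\<lambda>x. cmod (H (?c x)))"
    using Henstock_Kurzweil_Integration.integral_norm_bound_integral[OF has_integral_integrable[OF I] ni] I
    by (simp add: integral_unique)
  moreover have "((\<lambda>x. cmod (H (?c x))) has_integral integral {0..1} (\<lambda>x. cmod (H (?c x)))) {0<..<1}"
    using has_integral_open_interval[of "\<lambda>x. cmod (H (?c x))" _ 0 1] ni
    by (simp add: has_integral_integral)
  then have "(\<integral>\<^sup>+x. ennreal (cmod (H (?c x))) * indicator {0<..<1} x \<partial>lborel) = ennreal (integral {0..1} (\<lambda>x. cmod (H (?c x))))"
    by (intro nn_integral_has_integral_lebesgue') auto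
  ultimately show ?thesis
    by (auto simp: circlepath intro!: ennreal_leI)
qed

lemma radial_int:
  fixes \<alpha> R :: real
  assumes "\<alpha> > 1" "0 < R" "R < 1"
  shows "(\<integral>\<^sup>+y. ennreal (exp(-4*pi*y) * (1 - exp(-4*pi*y)) powr (\<alpha>-2)) * indicator {- ln R / (2*pi)<..} y \<partial>lborel)
     = ennreal (C_alpha \<alpha> R / (4*pi))"
proof -
  define b where "b = - ln R / (2*pi)"
  define F where "F y = (1 - exp(-4*pi*y)) powr (\<alpha>-1) / (4*pi*(\<alpha>-1))" for y
  have lnR: "ln R < 0" using assms by simp
  have b0: "b > 0" unfolding b_def using lnR by (intro divide_pos_pos) auto
  have eb: "exp (-4*pi*b) = R^2"
  proof -
    have "exp (-4*pi*b) = exp (ln R + ln R)" by (simp add: b_def)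
    also have "\<dots> = exp (ln R) * exp (ln R)" by (rule exp_add)
    also have "\<dots> = R^2" using assms by (simp add: power2_eq_square)
    finally show ?thesis .
  qed
  have pos: "0 < 1 - exp(-4*pi*y)" if "b \<le> y" for y
    using b0 that by (simp add: pi_gt_zero)
  have "(\<integral>\<^sup>+y. ennreal (exp(-4*pi*y) * (1 - exp(-4*pi*y)) powr (\<alpha>-2)) * indicator {b..} y \<partial>lborel) = 1/(4*pi*(\<alpha>-1)) - F b"
  proof (rule nn_integral_FTC_atLeast)
    show "(\<lambda>y. exp(-4*pi*y) * (1 - exp(-4*pi*y)) powr (\<alpha>-2)) \<in> borel_measurable borel" by measurable
    fix x assume x: "b \<le> x"
    show "0 \<le> exp(-4*pi*x) * (1 - exp(-4*pi*x)) powr (\<alpha>-2)" by simp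
    have p: "0 < 1 - exp(-4*pi*x)" using pos[OF x] .
    show "(F has_real_derivative exp(-4*pi*x) * (1 - exp(-4*pi*x)) powr (\<alpha>-2)) (at x)"
    proof -
      have d1: "((\<lambda>y. 1 - exp(-4*pi*y)) has_real_derivative (4*pi*exp(-4*pi*x))) (at x)"
        by (auto intro!: derivative_eq_intros)
      have d2: "((\<lambda>y. (1 - exp(-4*pi*y)) powr (\<alpha>-1)) has_real_derivative
          (\<alpha>-1) * (1 - exp(-4*pi*x)) powr (\<alpha>-1-1) * (4*pi*exp(-4*pi*x))) (at x)"
        by (rule DERIV_chain2[OF has_real_derivative_powr[OF p] d1])
      have d3: "(F has_real_derivative
          (\<alpha>-1) * (1 - exp(-4*pi*x)) powr (\<alpha>-1-1) * (4*pi*exp(-4*pi*x)) / (4*pi*(\<alpha>-1))) (at x)"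
        unfolding F_def by (rule DERIV_cdivide[OF d2])
      have "\<alpha> - 1 - 1 = \<alpha> - 2" by simp
      then have "(\<alpha>-1) * (1 - exp(-4*pi*x)) powr (\<alpha>-1-1) * (4*pi*exp(-4*pi*x)) / (4*pi*(\<alpha>-1))
          = exp(-4*pi*x) * (1 - exp(-4*pi*x)) powr (\<alpha>-2)"
        using assms by (simp add: field_simps)
      then show ?thesis using d3 by simp
    qed
  next
    show "(F \<longlongrightarrow> 1/(4*pi*(\<alpha>-1))) at_top"
    proof -
      have "((\<lambda>y. exp(-4*pi*y)) \<longlongrightarrow> 0) at_top" by real_asymp
      then have "((\<lambda>y. (1 - exp(-4*pi*y)) powr (\<alpha>-1) / (4*pi*(\<alpha>-1))) \<longlongrightarrow> (1 - 0) powr (\<alpha>-1) / (4*pi*(\<alpha>-1))) at_top"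
        using assms by (intro tendsto_intros) auto
      then show ?thesis unfolding F_def[abs_def] by simp
    qed
  qed
  also have "(\<integral>\<^sup>+y. ennreal (exp(-4*pi*y) * (1 - exp(-4*pi*y)) powr (\<alpha>-2)) * indicator {b..} y \<partial>lborel)
     = (\<integral>\<^sup>+y. ennreal (exp(-4*pi*y) * (1 - exp(-4*pi*y)) powr (\<alpha>-2)) * indicator {b<..} y \<partial>lborel)"
    by (intro nn_integral_cong_AE, use AE_lborel_singleton[of b] in eventually_elim) (auto simp: indicator_def)
  also have "1/(4*pi*(\<alpha>-1)) - F b = C_alpha \<alpha> R / (4*pi)"
    using assms by (simp only: F_def eb) (simp add: C_alpha_def field_simps)
  finally show ?thesis by (simp add: b_def)
qed




lemma mob_id: "(cmod (1 - cnj z * v))^2 - (cmod (z - v))^2 = (1 - (cmod z)^2) * (1 - (cmod v)^2)"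
  unfolding cmod_power2 by (simp add: power2_eq_square algebra_simps)

lemma key_alg:
  fixes a t q \<alpha> :: real
  assumes "a > 0" "t > 0" "q > 0"
  shows "(a*t/q^2) powr (\<alpha>-2) * (a^2/q^4) = t powr (\<alpha>-2) * a powr \<alpha> * q powr (-2*\<alpha>)"
proof -
  have q2: "q^2 = q powr 2" using assms by (simp add: powr_numeral)
  have "(a*t/q^2) powr (\<alpha>-2) = a powr (\<alpha>-2) * t powr (\<alpha>-2) / (q^2) powr (\<alpha>-2)"
    using assms by (simp add: powr_mult powr_divide)
  also have "(q^2) powr (\<alpha>-2) = q powr (2*\<alpha>-4)"
    unfolding q2 powr_powr by (simp add: algebra_simps)
  finally have 1: "(a*t/q^2) powr (\<alpha>-2) = a powr (\<alpha>-2) * t powr (\<alpha>-2) / q powr (2*\<alpha>-4)" .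
  have 2: "a^2 = a powr 2" "q^4 = q powr 4" using assms by (simp_all add: powr_numeral)
  have 3: "a powr (\<alpha>-2) * a powr 2 = a powr \<alpha>" by (simp add: powr_add[symmetric])
  have 4: "q powr (2*\<alpha>-4) * q powr 4 = q powr (2*\<alpha>)" by (simp add: powr_add[symmetric])
  have 5: "q powr (-2*\<alpha>) = 1 / q powr (2*\<alpha>)" using assms by (simp add: powr_minus divide_inverse)
  show ?thesis
    unfolding 1 2 5 using 3 4 assms
    by (simp add: field_simps)
qed




definition mob :: "complex \<Rightarrow> complex \<Rightarrow> complex" where
  "mob z v = (z - v) / (1 - cnj z * v)"

lemma den_Re: assumes "cmod z < 1" "cmod v < 1" shows "Re (1 - cnj z * v) > 0"
proof -
  have "Re (cnj z * v) \<le> cmod (cnj z * v)" by (rule complex_Re_le_cmod)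
  also have "\<dots> = cmod z * cmod v" by (simp add: norm_mult)
  also have "\<dots> < 1" using assms by (metis mult_strict_mono' norm_ge_zero mult_1)
  finally show ?thesis by simp
qed

lemma den_nz: assumes "cmod z < 1" "cmod v < 1" shows "1 - cnj z * v \<noteq> 0"
proof
  assume "1 - cnj z * v = 0"
  then have "Re (1 - cnj z * v) = 0" by simp
  with den_Re[OF assms] show False by simp
qed

lemma zz: "cnj z * z = of_real ((cmod z)^2)"
  by (metis complex_norm_square mult.commute)

lemma mob_norm:
  assumes "cmod z < 1" "cmod v < 1"
  shows "1 - (cmod (mob z v))^2 = (1 - (cmod z)^2) * (1 - (cmod v)^2) / (cmod (1 - cnj z * v))^2"
proof -
  have m: "cmod (1 - cnj z * v) > 0" using den_nz[OF assms] by simp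
  have "cmod (mob z v) = cmod (z - v) / cmod (1 - cnj z * v)" by (simp add: mob_def norm_divide)
  then have "1 - (cmod (mob z v))^2 = ((cmod (1 - cnj z * v))^2 - (cmod (z - v))^2) / (cmod (1 - cnj z * v))^2"
    using m by (simp add: field_simps power2_eq_square)
  then show ?thesis by (simp add: mob_id)
qed

lemma mob_norm_pos:
  assumes "cmod z < 1" "cmod v < 1"
  shows "1 - (cmod (mob z v))^2 > 0"
proof -
  have m: "cmod (1 - cnj z * v) > 0" using den_nz[OF assms] by simp
  have "(cmod z)^2 < 1" "(cmod v)^2 < 1" using assms by (simp_all add: power_less_one_iff abs_square_less_1)
  then show ?thesis using m by (simp add: mob_norm[OF assms])
qed

lemma mob_in: assumes "cmod z < 1" "cmod v < 1" shows "cmod (mob z v) < 1"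
proof -
  have "(cmod (mob z v))^2 < 1" using mob_norm_pos[OF assms] by simp
  then show ?thesis by (simp add: abs_square_less_1)
qed

lemma ratio_helper: "a \<noteq> 0 \<Longrightarrow> d \<noteq> 0 \<Longrightarrow> (x * a / d) / (a / d) = (x::complex)"
  by (simp add: field_simps)

lemma mob_ph: assumes "cmod z < 1" "cmod v < 1" shows "pseudohyp (mob z v) z = cmod v"
proof -
  have d: "1 - cnj z * v \<noteq> 0" using den_nz[OF assms] .
  have a: "1 - cnj z * z \<noteq> 0"
  proof
    assume "1 - cnj z * z = 0"
    then have "(cmod z)^2 = 1" unfolding zz by (metis eq_iff_diff_eq_0 of_real_eq_1_iff)
    then show False using assms norm_ge_zero[of z] by (auto simp: power2_eq_1_iff)
  qed
  have e1: "mob z v - z = - v * (1 - cnj z * z) / (1 - cnj z * v)"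
    using d by (simp add: mob_def field_simps; simp add: algebra_simps)
  have e2: "1 - mob z v * cnj z = (1 - cnj z * z) / (1 - cnj z * v)"
    using d by (simp add: mob_def field_simps; simp add: algebra_simps)
  have "(mob z v - z) / (1 - mob z v * cnj z) = - v"
    unfolding e1 e2 using ratio_helper[OF a d, of "-v"] by simp
  then show ?thesis by (simp add: pseudohyp_def)
qed

lemma mob_mob: assumes "cmod z < 1" "cmod v < 1" shows "mob z (mob z v) = v"
proof -
  have d: "1 - cnj z * v \<noteq> 0" using den_nz[OF assms] .
  have a: "1 - cnj z * z \<noteq> 0"
  proof
    assume "1 - cnj z * z = 0"
    then have "(cmod z)^2 = 1" unfolding zz by (metis eq_iff_diff_eq_0 of_real_eq_1_iff)
    then show False using assms norm_ge_zero[of z] by (auto simp: power2_eq_1_iff)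
  qed
  have e1: "z - mob z v = v * (1 - cnj z * z) / (1 - cnj z * v)"
    using d by (simp add: mob_def field_simps; simp add: algebra_simps)
  have e2: "1 - cnj z * mob z v = (1 - cnj z * z) / (1 - cnj z * v)"
    using d by (simp add: mob_def field_simps; simp add: algebra_simps)
  show ?thesis
    unfolding mob_def[of z "mob z v"] e1 e2 using ratio_helper[OF a d, of v] by simp
qed

lemma mob_deriv: assumes "1 - cnj z * v \<noteq> 0"
  shows "(mob z has_field_derivative (cnj z * z - 1) / (1 - cnj z * v)^2) (at v)"
  unfolding mob_def[abs_def]
  apply (rule derivative_eq_intros refl)+
  using assms by (simp_all add: field_simps power2_eq_square)

lemma pseudohyp_sym: "pseudohyp a b = pseudohyp b a"
proof -
  have "cmod (1 - a * cnj b) = cmod (1 - b * cnj a)"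
    by (metis complex_cnj_cnj complex_cnj_diff complex_cnj_mult complex_cnj_one complex_mod_cnj mult.commute)
  moreover have "cmod (a - b) = cmod (b - a)" by (rule norm_minus_commute)
  ultimately show ?thesis by (simp add: pseudohyp_def norm_divide)
qed




lemma E_split: "exp (2 * of_real pi * \<i> * Complex x y) = of_real (exp (-2*pi*y)) * exp (2 * of_real pi * \<i> * of_real x)"
proof -
  have "2 * of_real pi * \<i> * Complex x y = of_real (-2*pi*y) + 2 * of_real pi * \<i> * of_real x"
    by (simp add: Complex_eq algebra_simps)
  then have "exp (2 * of_real pi * \<i> * Complex x y) = exp (of_real (-2*pi*y) + 2 * of_real pi * \<i> * of_real x)"
    by (simp only:)
  also have "\<dots> = exp (of_real (-2*pi*y)) * exp (2 * of_real pi * \<i> * of_real x)" by (rule exp_add)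
  also have "exp (of_real (-2*pi*y)) = (of_real (exp (-2*pi*y)) :: complex)" by (rule exp_of_real)
  finally show ?thesis .
qed

lemma norm_E: "cmod (exp (2 * of_real pi * \<i> * w)) = exp (-2*pi*Im w)"
  by (simp add: norm_exp_eq_Re)

lemma ennreal_mult_assoc_helper: "0 \<le> c \<Longrightarrow> ennreal (c * k) * i = ennreal c * (ennreal k * (i::ennreal))"
  by (simp add: ennreal_mult' mult.assoc)

lemma sq_lt1: "cmod x < 1 \<Longrightarrow> (cmod x)^2 < 1"
  using power_strict_mono[of "cmod x" 1 2] by simp

lemma pointwise:
  fixes \<alpha> R :: real and F :: "complex \<Rightarrow> complex" and z :: complex
  assumes \<alpha>: "\<alpha> > 1" and R: "0 < R" "R < 1" and Fh: "F holomorphic_on ball 0 1" and z: "cmod z < 1"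
  shows "ennreal (pi * C_alpha \<alpha> R * ((1 - (cmod z)^2) powr \<alpha> * cmod (F z)))
     \<le> (\<integral>\<^sup>+u. ennreal (cmod (F u) * (1 - (cmod u)^2) powr (\<alpha>-2)) * indicator (ball 0 1) u * indicator {u. pseudohyp u z < R} u \<partial>lborel)"
proof -
  define E where "E w = exp (2 * of_real pi * \<i> * w)" for w
  define g where "g w = mob z (E w)" for w
  define g' where "g' w = (cnj z * z - 1) / (1 - cnj z * E w)^2 * (2 * of_real pi * \<i> * E w)" for w
  define b where "b = - ln R / (2*pi)"
  define Q where "Q = {w. 0 < Re w \<and> Re w < 1 \<and> b < Im w}"
  define f where "f u = cmod (F u) * (1 - (cmod u)^2) powr (\<alpha>-2) * indicator (ball 0 1) u" for u
  define H where "H v = F (mob z v) * exp (- (2 * of_real \<alpha>) * Ln (1 - cnj z * v))" for v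
  define A where "A = (1 - (cmod z)^2) powr \<alpha>"
  define K where "K y = exp(-4*pi*y) * (1 - exp(-4*pi*y)) powr (\<alpha>-2)" for y
  have lnR: "ln R < 0" using R by simp
  have b0: "b > 0" unfolding b_def using lnR by (intro divide_pos_pos) auto
  have eb: "exp (-2*pi*b) = R" using R by (simp add: b_def)
  have EQ: "cmod (E w) < R" if "w \<in> Q" for w
  proof -
    have "cmod (E w) = exp (-2*pi*Im w)" by (simp add: E_def norm_E)
    also have "\<dots> < exp (-2*pi*b)" using that by (simp add: Q_def)
    finally show ?thesis using eb by simp
  qed
  have E1: "cmod (E w) < 1" if "w \<in> Q" for w using EQ[OF that] R by simp
  have gball: "cmod (g w) < 1" if "w \<in> Q" for w unfolding g_def using mob_in[OF z E1[OF that]] .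
  have gph: "pseudohyp (g w) z < R" if "w \<in> Q" for w unfolding g_def using mob_ph[OF z E1[OF that]] EQ[OF that] by simp
  have injE: "inj_on E Q"
  proof (rule inj_onI)
    fix x y assume xy: "x \<in> Q" "y \<in> Q" "E x = E y"
    then obtain n :: int where n: "2 * of_real pi * \<i> * x = 2 * of_real pi * \<i> * y + complex_of_real (real_of_int (2 * n) * pi) * \<i>"
      unfolding E_def exp_eq by blast
    have "Im (2 * of_real pi * \<i> * x) = Im (2 * of_real pi * \<i> * y + complex_of_real (real_of_int (2 * n) * pi) * \<i>)"
      using n by simp
    then have "2*pi*Re x = 2*pi*Re y + 2*n*pi" by simp
    then have "pi * (2 * Re x - 2 * Re y - 2 * n) = 0" by (simp add: algebra_simps)
    then have "2 * Re x - 2 * Re y - 2 * n = 0" by simp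
    then have rx: "Re x = Re y + n" by simp
    have "Re (2 * of_real pi * \<i> * x) = Re (2 * of_real pi * \<i> * y + complex_of_real (real_of_int (2 * n) * pi) * \<i>)"
      using n by simp
    then have ix: "Im x = Im y" by simp
    have "Re x - Re y < 1" "Re y - Re x < 1" using xy by (auto simp: Q_def)
    with rx have "n = 0" by linarith
    with rx ix show "x = y" by (simp add: complex_eq_iff)
  qed
  have inj: "inj_on g Q"
  proof (rule inj_onI)
    fix x y assume xy: "x \<in> Q" "y \<in> Q" "g x = g y"
    then have "mob z (g x) = mob z (g y)" by simp
    then have "E x = E y" using mob_mob[OF z E1[OF xy(1)]] mob_mob[OF z E1[OF xy(2)]] by (simp add: g_def)
    then show "x = y" using injE xy by (auto simp: inj_on_def)
  qed
  have der: "(g has_field_derivative g' w) (at w)" if "w \<in> Q" for w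
  proof -
    have dE: "(E has_field_derivative (2 * of_real pi * \<i> * E w)) (at w)"
      unfolding E_def by (auto intro!: derivative_eq_intros)
    have dm: "(mob z has_field_derivative (cnj z * z - 1) / (1 - cnj z * E w)^2) (at (E w))"
      by (rule mob_deriv[OF den_nz[OF z E1[OF that]]])
    have "g = (\<lambda>x. mob z (E x))" by (simp add: g_def[abs_def])
    then show ?thesis using DERIV_chain2[OF dm dE] by (simp add: g'_def)
  qed
  have openQ: "open Q" unfolding Q_def
    by (intro open_Collect_conj open_Collect_less continuous_intros)
  have convQ: "convex Q"
  proof -
    have "Q = {w. 0 < Re w} \<inter> {w. -1 < Re (- w)} \<inter> {w. b < Im w}" by (auto simp: Q_def)
    moreover have "convex {w. -1 < Re (- w)}"
    proof -
      have "{w. -1 < Re (- w)} = uminus ` {w. -1 < Re w}" proof (intro equalityI subsetI)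
        fix x assume "x \<in> {w. -1 < Re (- w)}"
        then have "-x \<in> {w. -1 < Re w}" "x = - (-x)" by auto
        then show "x \<in> uminus ` {w. -1 < Re w}" by blast
      qed auto
      then show ?thesis by (simp add: convex_negations convex_halfspace_Re_gt)
    qed
    ultimately show ?thesis by (simp add: convex_Int convex_halfspace_Re_gt convex_halfspace_Im_gt)
  qed
  have holo: "g holomorphic_on Q"
    using der by (auto simp: holomorphic_on_def field_differentiable_def intro: has_field_derivative_at_within)
  have notconst: "\<not> g constant_on Q"
  proof
    assume "g constant_on Q"
    then obtain c where c: "\<And>w. w \<in> Q \<Longrightarrow> g w = c" by (auto simp: constant_on_def)
    have p: "Complex (1/4) (b+1) \<in> Q" "Complex (1/2) (b+1) \<in> Q" by (auto simp: Q_def)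
    have "g (Complex (1/4) (b+1)) = g (Complex (1/2) (b+1))" using c[OF p(1)] c[OF p(2)] by (rule trans[OF _ sym])
    then have "Complex (1/4) (b+1) = Complex (1/2) (b+1)" using inj_onD[OF inj _ p(1) p(2)] by blast
    then show False by simp
  qed
  have gQopen: "open (g ` Q)"
    by (rule open_mapping_thm[OF holo openQ convex_connected[OF convQ] openQ subset_refl notconst])
  have Fc: "continuous_on (ball 0 1) F" using Fh by (rule holomorphic_on_imp_continuous_on)
  have f_meas[measurable]: "f \<in> borel_measurable borel"
  proof -
    have "continuous_on (ball 0 1) (\<lambda>u. cmod (F u) * (1 - (cmod u)^2) powr (\<alpha>-2))"
      by (intro continuous_intros continuous_on_powr Fc)
         (auto; metis sq_lt1 less_irrefl)
    from borel_measurable_continuous_on_indicator[OF _ this]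
    have "(\<lambda>u. indicator (ball 0 1) u *\<^sub>R (cmod (F u) * (1 - (cmod u)^2) powr (\<alpha>-2))) \<in> borel_measurable borel" by simp
    then show ?thesis by (simp add: f_def[abs_def] mult.commute)
  qed
  have fnn: "0 \<le> f u" for u by (simp add: f_def)
  have g'c: "continuous_on Q g'"
    unfolding g'_def E_def
    by (intro continuous_intros) (use den_nz[OF z E1] in \<open>auto simp: E_def\<close>)
  have gc: "continuous_on Q g" using holo by (rule holomorphic_on_imp_continuous_on)
  have lm: "(\<lambda>w. ennreal (f (g w) * (cmod (g' w))^2) * indicator Q w) \<in> borel_measurable borel"
  proof -
    have Fg: "continuous_on Q (\<lambda>w. F (g w))"
      by (rule continuous_on_compose2[OF Fc gc]) (use gball in auto)
    have pos: "\<forall>w\<in>Q. 0 < 1 - (cmod (g w))^2" using gball sq_lt1 by force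
    have "continuous_on Q (\<lambda>w. cmod (F (g w)) * (1 - (cmod (g w))^2) powr (\<alpha>-2) * (cmod (g' w))^2)"
      by (intro continuous_intros continuous_on_powr Fg gc g'c pos) (use pos in force)
    from borel_measurable_continuous_on_indicator[OF _ this]
    have "(\<lambda>w. indicator Q w *\<^sub>R (cmod (F (g w)) * (1 - (cmod (g w))^2) powr (\<alpha>-2) * (cmod (g' w))^2)) \<in> borel_measurable borel"
      using openQ by simp
    then have "(\<lambda>w. ennreal (indicator Q w *\<^sub>R (cmod (F (g w)) * (1 - (cmod (g w))^2) powr (\<alpha>-2) * (cmod (g' w))^2))) \<in> borel_measurable borel"
      by measurable
    moreover have "(\<lambda>w. ennreal (indicator Q w *\<^sub>R (cmod (F (g w)) * (1 - (cmod (g w))^2) powr (\<alpha>-2) * (cmod (g' w))^2)))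
       = (\<lambda>w. ennreal (f (g w) * (cmod (g' w))^2) * indicator Q w)"
      using gball by (auto simp: fun_eq_iff indicator_def f_def)
    ultimately show ?thesis by metis
  qed

  have mobh: "mob z holomorphic_on ball 0 1"
    unfolding mob_def[abs_def] by (intro holomorphic_intros) (use den_nz[OF z] in auto)
  have H1: "(\<lambda>v. F (mob z v)) holomorphic_on ball 0 1"
  proof -
    have "mob z ` ball 0 1 \<subseteq> ball 0 1" using mob_in[OF z] by auto
    then show ?thesis using holomorphic_on_compose_gen[OF mobh Fh] by (simp add: o_def)
  qed
  have H2: "(\<lambda>v. exp (- (2 * of_real \<alpha>) * Ln (1 - cnj z * v))) holomorphic_on ball 0 1"
  proof -
    have nn: "1 - cnj z * v \<notin> \<real>\<^sub>\<le>\<^sub>0" if "v \<in> ball 0 1" for v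
    proof -
      have "Re (1 - cnj z * v) > 0" using that by (intro den_Re[OF z]) simp
      then show ?thesis by (simp only: complex_nonpos_Reals_iff) simp
    qed
    show ?thesis by (intro holomorphic_intros holomorphic_on_Ln' nn) auto
  qed
  have Hh: "H holomorphic_on ball 0 1"
    unfolding H_def[abs_def] by (rule holomorphic_on_mult[OF H1 H2])
  have H0: "H 0 = F z" by (simp add: H_def mob_def)
  have Hc: "continuous_on (ball 0 1) H" using Hh by (rule holomorphic_on_imp_continuous_on)
  have A0: "0 \<le> A" by (simp add: A_def)
  have K0: "0 \<le> K y" for y by (simp add: K_def)
  have ident: "f (g w) * (cmod (g' w))^2 = 4*pi^2 * K (Im w) * A * cmod (H (E w))" if w: "w \<in> Q" for w
  proof -
    define v where "v = E w"
    define a where "a = 1 - (cmod z)^2"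
    define m where "m = cmod (1 - cnj z * v)"
    define \<rho> where "\<rho> = exp (-2*pi*Im w)"
    define t where "t = 1 - \<rho>^2"
    have v1: "cmod v < 1" using E1[OF w] by (simp add: v_def)
    have nv: "cmod v = \<rho>" by (simp add: v_def E_def norm_E \<rho>_def)
    have a0: "a > 0" using sq_lt1[OF z] by (simp add: a_def)
    have m0: "m > 0" using den_nz[OF z v1] by (simp add: m_def)
    have t0: "t > 0" using sq_lt1[OF v1] by (simp add: t_def nv)
    have fg: "f (g w) = cmod (F (mob z v)) * (a*t/m^2) powr (\<alpha>-2)"
      using gball[OF w] mob_norm[OF z v1] by (simp add: f_def g_def v_def[symmetric] a_def t_def m_def nv)
    have c1: "cmod (cnj z * z - 1) = a"
    proof -
      have e: "cnj z * z - 1 = complex_of_real ((cmod z)^2 - 1)" by (simp only: zz of_real_diff of_real_1)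
      have "cmod (complex_of_real ((cmod z)^2 - 1)) = 1 - (cmod z)^2"
        using sq_lt1[OF z] by (simp only: norm_of_real)
      then show ?thesis by (simp only: e a_def)
    qed
    have c2: "cmod (2 * of_real pi * \<i> * v) = 2 * pi * \<rho>" by (simp add: norm_mult nv)
    have g'n: "(cmod (g' w))^2 = a^2/m^4 * (4*pi^2*\<rho>^2)"
      by (simp add: g'_def v_def[symmetric] norm_mult norm_divide norm_power c1 c2 m_def[symmetric] power_mult_distrib power_divide nv)
    have Hn: "cmod (H v) = cmod (F (mob z v)) * m powr (-2*\<alpha>)"
    proof -
      have "cmod (exp (- (2 * of_real \<alpha>) * Ln (1 - cnj z * v))) = exp (-2*\<alpha> * ln m)"
        using den_nz[OF z v1] by (simp add: norm_exp_eq_Re Re_Ln m_def)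
      also have "\<dots> = m powr (-2*\<alpha>)" using m0 by (simp add: powr_def)
      finally show ?thesis by (simp add: H_def norm_mult)
    qed
    have Kn: "K (Im w) = \<rho>^2 * t powr (\<alpha>-2)"
    proof -
      have "\<rho>^2 = exp (-4*pi*Im w)" by (simp add: \<rho>_def power2_eq_square exp_add[symmetric])
      then show ?thesis by (simp add: K_def t_def)
    qed
    have "f (g w) * (cmod (g' w))^2 = cmod (F (mob z v)) * (4*pi^2*\<rho>^2) * ((a*t/m^2) powr (\<alpha>-2) * (a^2/m^4))"
      by (simp add: fg g'n)
    also have "\<dots> = cmod (F (mob z v)) * (4*pi^2*\<rho>^2) * (t powr (\<alpha>-2) * a powr \<alpha> * m powr (-2*\<alpha>))"
      by (simp only: key_alg[OF a0 t0 m0])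
    also have "\<dots> = 4*pi^2 * K (Im w) * A * cmod (H (E w))"
      by (simp add: Kn Hn A_def a_def[symmetric] v_def[symmetric])
    finally show ?thesis .
  qed
  have inner: "ennreal (4*pi^2*A*cmod (F z) * K y) * indicator {b<..} y
      \<le> (\<integral>\<^sup>+x. ennreal (f (g (Complex x y)) * (cmod (g' (Complex x y)))^2) * indicator Q (Complex x y) \<partial>lborel)" for y
  proof (cases "b < y")
    case False then show ?thesis by simp
  next
    case True
    define r where "r = exp (-2*pi*y)"
    have r0: "0 < r" by (simp add: r_def)
    have r1: "r < 1" using True b0 by (simp add: r_def)
    have EC: "E (Complex x y) = of_real r * exp (2 * of_real pi * \<i> * of_real x)" for x
      by (simp add: E_def E_split r_def)
    have meas: "(\<lambda>x. ennreal (cmod (H (of_real r * exp (2 * of_real pi * \<i> * of_real x)))) * indicator {0<..<1} x) \<in> borel_measurable borel"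
    proof -
      have "continuous_on UNIV (\<lambda>x::real. H (of_real r * exp (2 * of_real pi * \<i> * of_real x)))"
        by (rule continuous_on_compose2[OF Hc]) (auto intro!: continuous_intros simp: norm_mult norm_exp_eq_Re r0 r1 abs_of_pos)
      then have [measurable]: "(\<lambda>x::real. H (of_real r * exp (2 * of_real pi * \<i> * of_real x))) \<in> borel_measurable borel"
        by (rule borel_measurable_continuous_onI)
      show ?thesis by measurable
    qed
    have "(\<integral>\<^sup>+x. ennreal (f (g (Complex x y)) * (cmod (g' (Complex x y)))^2) * indicator Q (Complex x y) \<partial>lborel)
        = (\<integral>\<^sup>+x. ennreal (4*pi^2 * K y * A) * (ennreal (cmod (H (of_real r * exp (2 * of_real pi * \<i> * of_real x)))) * indicator {0<..<1} x) \<partial>lborel)"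
    proof (intro nn_integral_cong)
      fix x :: real
      show "ennreal (f (g (Complex x y)) * (cmod (g' (Complex x y)))^2) * indicator Q (Complex x y)
         = ennreal (4*pi^2 * K y * A) * (ennreal (cmod (H (of_real r * exp (2 * of_real pi * \<i> * of_real x)))) * indicator {0<..<1} x)"
      proof (cases "x \<in> {0<..<1}")
        case True
        then have "Complex x y \<in> Q" using \<open>b < y\<close> by (simp add: Q_def)
        from ident[OF this] show ?thesis using True \<open>Complex x y \<in> Q\<close> A0 K0[of y]
          by (simp add: EC ennreal_mult'' mult.assoc)
      next
        case False
        then have "Complex x y \<notin> Q" by (auto simp: Q_def)
        then show ?thesis using False by simp
      qed
    qed
    also have "\<dots> = ennreal (4*pi^2 * K y * A) * (\<integral>\<^sup>+x. ennreal (cmod (H (of_real r * exp (2 * of_real pi * \<i> * of_real x)))) * indicator {0<..<1} x \<partial>lborel)"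
      using meas by (simp add: nn_integral_cmult)
    also have "\<dots> \<ge> ennreal (4*pi^2 * K y * A) * ennreal (cmod (H 0))"
      by (intro mult_left_mono circle_mean[OF Hh r0 r1]) simp
    finally show ?thesis using True A0 K0[of y]
      by (simp add: H0 ennreal_mult''[symmetric] mult_ac)
  qed
  have step5: "(\<integral>\<^sup>+y. ennreal (4*pi^2*A*cmod (F z) * K y) * indicator {b<..} y \<partial>lborel)
      = ennreal (pi * C_alpha \<alpha> R * (A * cmod (F z)))"
  proof -
    have "(\<integral>\<^sup>+y. ennreal (4*pi^2*A*cmod (F z) * K y) * indicator {b<..} y \<partial>lborel)
       = (\<integral>\<^sup>+y. ennreal (4*pi^2*A*cmod (F z)) * (ennreal (K y) * indicator {b<..} y) \<partial>lborel)"
    proof (intro nn_integral_cong)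
      fix y
      have c0: "0 \<le> 4*pi^2*A*cmod (F z)" using A0 by simp
      show "ennreal (4*pi^2*A*cmod (F z) * K y) * indicator {b<..} y = ennreal (4*pi^2*A*cmod (F z)) * (ennreal (K y) * indicator {b<..} y)"
        by (rule ennreal_mult_assoc_helper[OF c0])
    qed
    also have "\<dots> = ennreal (4*pi^2*A*cmod (F z)) * (\<integral>\<^sup>+y. ennreal (K y) * indicator {b<..} y \<partial>lborel)"
      by (subst nn_integral_cmult) (auto simp: K_def)
    also have "(\<integral>\<^sup>+y. ennreal (K y) * indicator {b<..} y \<partial>lborel) = ennreal (C_alpha \<alpha> R / (4*pi))"
      unfolding K_def b_def by (rule radial_int[OF \<alpha> R])
    also have "ennreal (4*pi^2*A*cmod (F z)) * ennreal (C_alpha \<alpha> R / (4*pi)) = ennreal (4*pi^2*A*cmod (F z) * (C_alpha \<alpha> R / (4*pi)))"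
      by (rule ennreal_mult'[symmetric]) (use A0 in simp)
    also have "4*pi^2*A*cmod (F z) * (C_alpha \<alpha> R / (4*pi)) = pi * C_alpha \<alpha> R * (A * cmod (F z))"
      by (simp add: field_simps power2_eq_square)
    finally show ?thesis .
  qed
  have S0: "(\<integral>\<^sup>+u. ennreal (cmod (F u) * (1 - (cmod u)^2) powr (\<alpha>-2)) * indicator (ball 0 1) u * indicator {u. pseudohyp u z < R} u \<partial>lborel)
     = (\<integral>\<^sup>+u. ennreal (f u) * indicator {u. pseudohyp u z < R} u \<partial>lborel)"
    by (intro nn_integral_cong) (simp add: f_def indicator_def)
  have step1: "(\<integral>\<^sup>+u. ennreal (f u) * indicator (g ` Q) u \<partial>lborel) \<le> (\<integral>\<^sup>+u. ennreal (f u) * indicator {u. pseudohyp u z < R} u \<partial>lborel)"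
    by (intro nn_integral_mono) (use gph in \<open>auto simp: indicator_def\<close>)
  have "ennreal (pi * C_alpha \<alpha> R * ((1 - (cmod z)^2) powr \<alpha> * cmod (F z)))
      = (\<integral>\<^sup>+y. ennreal (4*pi^2*A*cmod (F z) * K y) * indicator {b<..} y \<partial>lborel)"
    using step5 by (simp add: A_def)
  also have "\<dots> \<le> (\<integral>\<^sup>+y. (\<integral>\<^sup>+x. ennreal (f (g (Complex x y)) * (cmod (g' (Complex x y)))^2) * indicator Q (Complex x y) \<partial>lborel) \<partial>lborel)"
    by (intro nn_integral_mono inner)
  also have "\<dots> = (\<integral>\<^sup>+w. ennreal (f (g w) * (cmod (g' w))^2) * indicator Q w \<partial>lborel)"
    by (rule nn_integral_C_Fubini[OF lm, symmetric])
  also have "\<dots> \<le> (\<integral>\<^sup>+u. ennreal (f u) * indicator (g ` Q) u \<partial>lborel)"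
    by (rule cov_C[OF openQ gQopen inj der f_meas fnn lm])
  also note step1
  finally show ?thesis using S0 by simp
qed




lemma cnj_meas[measurable]: "cnj \<in> borel_measurable borel"
  by (intro borel_measurable_continuous_onI continuous_intros)

lemma ph_meas[measurable]: "(\<lambda>p. pseudohyp (snd p) (fst p)) \<in> borel_measurable (lborel \<Otimes>\<^sub>M lborel)"
  unfolding pseudohyp_def by measurable

lemma C_alpha_pos: assumes "\<alpha> > 1" "0 < R" "R < 1" shows "C_alpha \<alpha> R > 0"
proof -
  have r: "0 < R^2" "R^2 \<le> 1" using assms by (auto intro: power_le_one)
  have "(1 - R^2) powr (\<alpha>-1) < 1 powr (\<alpha>-1)"
    using assms r by (intro powr_less_mono2) auto
  then show ?thesis using assms by (simp add: C_alpha_def)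
qed

theorem theorem2:
  fixes \<alpha> R :: real and \<Omega> :: "complex set" and F :: "complex \<Rightarrow> complex"
  assumes "\<alpha> > 1"
    and "\<Omega> \<in> sets lebesgue" and "\<Omega> \<subseteq> ball 0 1"
    and "F \<in> bergman_space 1 \<alpha>"
    and "0 < R" and "R < 1"
  shows "bergman_norm_p 1 \<alpha> (\<lambda>z. F z * indicator \<Omega> z)
           \<le> ennreal (2 / C_alpha \<alpha> R) * rho_D \<Omega> R * bergman_norm_p 1 \<alpha> F"
proof -
  note \<alpha> = \<open>\<alpha> > 1\<close> and R = \<open>0 < R\<close> \<open>R < 1\<close>
  have Fh: "F holomorphic_on ball 0 1" using assms(4) by (simp add: bergman_space_def)
  define C where "C = C_alpha \<alpha> R"
  have C0: "C > 0" unfolding C_def by (rule C_alpha_pos[OF \<alpha> R])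
  define \<rho> where "\<rho> = rho_D \<Omega> R"
  define w2 where "w2 u = (1 - (cmod u)^2) powr (\<alpha>-2)" for u
  define h where "h u = (1 - (cmod u)^2) powr (-2)" for u
  define fw where "fw u = ennreal (cmod (F u) * w2 u) * indicator (ball 0 1) u" for u
  have Fc: "continuous_on (ball 0 1) F" using Fh by (rule holomorphic_on_imp_continuous_on)
  have fw_meas[measurable]: "fw \<in> borel_measurable borel"
  proof -
    have "continuous_on (ball 0 1) (\<lambda>u. cmod (F u) * w2 u)"
      unfolding w2_def
      by (intro continuous_intros continuous_on_powr Fc) (auto; metis sq_lt1 less_irrefl)
    from borel_measurable_continuous_on_indicator[OF _ this]
    have "(\<lambda>u. indicator (ball 0 1) u *\<^sub>R (cmod (F u) * w2 u)) \<in> borel_measurable borel" by simp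
    then have "(\<lambda>u. ennreal (indicator (ball 0 1) u *\<^sub>R (cmod (F u) * w2 u))) \<in> borel_measurable borel"
      by measurable
    moreover have "(\<lambda>u. ennreal (indicator (ball 0 1) u *\<^sub>R (cmod (F u) * w2 u))) = fw"
      by (auto simp: fun_eq_iff fw_def indicator_def)
    ultimately show ?thesis by metis
  qed
  have h_meas[measurable]: "h \<in> borel_measurable borel" unfolding h_def[abs_def] by measurable
  obtain S N N' where SN: "\<Omega> = S \<union> N" "N \<subseteq> N'" "N' \<in> null_sets lborel" "S \<in> sets lborel"
    using assms(2) by (rule sets_completionE)
  define \<Omega>' where "\<Omega>' = (S \<union> N') \<inter> ball 0 1"
  have \<Omega>'_meas[measurable]: "\<Omega>' \<in> sets borel" using SN by (auto simp: \<Omega>'_def)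
  have sub: "\<Omega> \<subseteq> \<Omega>'" using SN assms(3) by (auto simp: \<Omega>'_def)
  have AEO: "AE x in lborel. indicator \<Omega> x = (indicator \<Omega>' x :: ennreal)"
    by (rule AE_I'[OF SN(3)]) (use SN sub in \<open>auto simp: \<Omega>'_def indicator_def\<close>)
  have AEO2: "AE x in lborel. x \<in> \<Omega> \<longleftrightarrow> x \<in> \<Omega>'"
    by (rule AE_I'[OF SN(3)]) (use SN sub in \<open>auto simp: \<Omega>'_def\<close>)
  define kk where "kk z u = ennreal (1/(pi*C)) * ennreal (h z) * indicator \<Omega>' z * fw u * indicator {p. pseudohyp (snd p) (fst p) < R} (z, u)" for z u
  have kk_meas: "case_prod kk \<in> borel_measurable (lborel \<Otimes>\<^sub>M lborel)"
    unfolding kk_def[abs_def] by measurable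
  have normF: "bergman_norm_p 1 \<alpha> F = ennreal (1/pi) * (\<integral>\<^sup>+u. fw u \<partial>lborel)"
    by (simp add: bergman_norm_p_def fw_def w2_def nn_integral_completion)
  have normL: "bergman_norm_p 1 \<alpha> (\<lambda>z. F z * indicator \<Omega> z) = ennreal (1/pi) * (\<integral>\<^sup>+z. fw z * indicator \<Omega>' z \<partial>lborel)"
  proof -
    have pt: "ennreal (cmod (F x * indicator \<Omega> x) powr 1 * (1 - (cmod x)^2) powr (\<alpha> - 2)) * indicator (ball 0 1) x = fw x * indicator \<Omega> x" for x
    proof (cases "x \<in> \<Omega>")
      case True
      then have "x \<in> ball 0 1" using assms(3) by auto
      then show ?thesis using True by (simp add: fw_def w2_def)
    qed (simp add: fw_def)
    have "bergman_norm_p 1 \<alpha> (\<lambda>z. F z * indicator \<Omega> z) = ennreal (1/pi) * (\<integral>\<^sup>+z. fw z * indicator \<Omega> z \<partial>lborel)"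
      by (simp only: bergman_norm_p_def nn_integral_completion pt)
    also have "(\<integral>\<^sup>+z. fw z * indicator \<Omega> z \<partial>lborel) = (\<integral>\<^sup>+z. fw z * indicator \<Omega>' z \<partial>lborel)"
      by (intro nn_integral_cong_AE) (use AEO in \<open>eventually_elim, simp\<close>)
    finally show ?thesis .
  qed
  have pw: "fw z * indicator \<Omega>' z \<le> (\<integral>\<^sup>+u. kk z u \<partial>lborel)" for z
  proof (cases "z \<in> \<Omega>'")
    case False then show ?thesis by simp
  next
    case True
    then have z: "cmod z < 1" by (auto simp: \<Omega>'_def)
    have P: "ennreal (pi * C * ((1 - (cmod z)^2) powr \<alpha> * cmod (F z)))
       \<le> (\<integral>\<^sup>+u. ennreal (cmod (F u) * (1 - (cmod u)^2) powr (\<alpha>-2)) * indicator (ball 0 1) u * indicator {u. pseudohyp u z < R} u \<partial>lborel)"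
      unfolding C_def by (rule pointwise[OF \<alpha> R Fh z])
    have a0: "1 - (cmod z)^2 > 0" using sq_lt1[OF z] by simp
    have eq: "cmod (F z) * w2 z = (1/(pi*C)) * h z * (pi * C * ((1 - (cmod z)^2) powr \<alpha> * cmod (F z)))"
    proof -
      have "w2 z = (1 - (cmod z)^2) powr \<alpha> * h z"
        unfolding w2_def h_def by (simp add: powr_add[symmetric])
      then show ?thesis using C0 by (simp add: field_simps)
    qed
    have nn1: "0 \<le> (1/(pi*C)) * h z" using C0 by (simp add: h_def)
    have "fw z * indicator \<Omega>' z = ennreal (cmod (F z) * w2 z)" using True z by (simp add: fw_def)
    also have "\<dots> = ennreal ((1/(pi*C)) * h z * (pi * C * ((1 - (cmod z)^2) powr \<alpha> * cmod (F z))))"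
      by (simp only: eq)
    also have "\<dots> = ennreal ((1/(pi*C)) * h z) * ennreal (pi * C * ((1 - (cmod z)^2) powr \<alpha> * cmod (F z)))"
      by (rule ennreal_mult'[OF nn1])
    also have "\<dots> \<le> ennreal ((1/(pi*C)) * h z) * (\<integral>\<^sup>+u. ennreal (cmod (F u) * (1 - (cmod u)^2) powr (\<alpha>-2)) * indicator (ball 0 1) u * indicator {u. pseudohyp u z < R} u \<partial>lborel)"
      by (intro mult_left_mono P) simp
    also have "\<dots> = (\<integral>\<^sup>+u. ennreal ((1/(pi*C)) * h z) * (ennreal (cmod (F u) * (1 - (cmod u)^2) powr (\<alpha>-2)) * indicator (ball 0 1) u * indicator {u. pseudohyp u z < R} u) \<partial>lborel)"
    proof -
      have [measurable]: "{u. pseudohyp u z < R} \<in> sets borel" unfolding pseudohyp_def by measurable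
      have "(\<lambda>u. fw u * indicator {u. pseudohyp u z < R} u) \<in> borel_measurable borel" by measurable
      moreover have "(\<lambda>u. fw u * indicator {u. pseudohyp u z < R} u) = (\<lambda>u. ennreal (cmod (F u) * (1 - (cmod u)^2) powr (\<alpha>-2)) * indicator (ball 0 1) u * indicator {u. pseudohyp u z < R} u)"
        by (simp add: fun_eq_iff fw_def w2_def)
      ultimately show ?thesis by (subst nn_integral_cmult) auto
    qed
    also have "\<dots> = (\<integral>\<^sup>+u. kk z u \<partial>lborel)"
    proof (intro nn_integral_cong)
      fix u
      have hsplit: "ennreal ((1/(pi*C)) * h z) = ennreal (1/(pi*C)) * ennreal (h z)"
        by (rule ennreal_mult') (use C0 in simp)
      show "ennreal ((1/(pi*C)) * h z) * (ennreal (cmod (F u) * (1 - (cmod u)^2) powr (\<alpha>-2)) * indicator (ball 0 1) u * indicator {u. pseudohyp u z < R} u) = kk z u"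
        unfolding hsplit using True by (simp add: kk_def fw_def w2_def indicator_def mult_ac)
    qed
    finally show ?thesis .
  qed
  have inner: "(\<integral>\<^sup>+z. kk z u \<partial>lborel) \<le> ennreal (1/(pi*C)) * \<rho> * fw u" for u
  proof (cases "u \<in> ball 0 1")
    case False then show ?thesis by (simp add: kk_def fw_def)
  next
    case True
    have "(\<integral>\<^sup>+z. kk z u \<partial>lborel) = (\<integral>\<^sup>+z. (ennreal (1/(pi*C)) * fw u) * (ennreal (h z) * indicator (\<Omega>' \<inter> phball u R) z) \<partial>lborel)"
      by (intro nn_integral_cong) (auto simp: kk_def phball_def indicator_def pseudohyp_sym[of u] \<Omega>'_def mult_ac)
    also have "\<dots> = (ennreal (1/(pi*C)) * fw u) * (\<integral>\<^sup>+z. ennreal (h z) * indicator (\<Omega>' \<inter> phball u R) z \<partial>lborel)"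
    proof -
      have [measurable]: "phball u R \<in> sets borel"
        unfolding phball_def pseudohyp_def by measurable
      show ?thesis by (subst nn_integral_cmult) auto
    qed
    also have "(\<integral>\<^sup>+z. ennreal (h z) * indicator (\<Omega>' \<inter> phball u R) z \<partial>lborel) = hyp_measure (\<Omega> \<inter> phball u R)"
      unfolding hyp_measure_def nn_integral_completion h_def
      by (intro nn_integral_cong_AE) (use AEO2 in \<open>eventually_elim, auto simp: indicator_def\<close>)
    finally have I: "(\<integral>\<^sup>+z. kk z u \<partial>lborel) = (ennreal (1/(pi*C)) * fw u) * hyp_measure (\<Omega> \<inter> phball u R)" .
    have "hyp_measure (\<Omega> \<inter> phball u R) \<le> \<rho>"
      unfolding \<rho>_def rho_D_def using True by (intro SUP_upper) auto
    then have "(ennreal (1/(pi*C)) * fw u) * hyp_measure (\<Omega> \<inter> phball u R) \<le> (ennreal (1/(pi*C)) * fw u) * \<rho>"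
      by (rule mult_left_mono) simp
    then show ?thesis using I by (simp add: mult_ac)
  qed
  have main: "(\<integral>\<^sup>+z. fw z * indicator \<Omega>' z \<partial>lborel) \<le> ennreal (1/(pi*C)) * \<rho> * (\<integral>\<^sup>+u. fw u \<partial>lborel)"
  proof -
    have "(\<integral>\<^sup>+z. fw z * indicator \<Omega>' z \<partial>lborel) \<le> (\<integral>\<^sup>+z. (\<integral>\<^sup>+u. kk z u \<partial>lborel) \<partial>lborel)"
      by (intro nn_integral_mono pw)
    also have "\<dots> = (\<integral>\<^sup>+u. (\<integral>\<^sup>+z. kk z u \<partial>lborel) \<partial>lborel)"
      by (rule lborel_pair.Fubini'[OF kk_meas, symmetric])
    also have "\<dots> \<le> (\<integral>\<^sup>+u. ennreal (1/(pi*C)) * \<rho> * fw u \<partial>lborel)"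
      by (intro nn_integral_mono inner)
    also have "\<dots> = ennreal (1/(pi*C)) * \<rho> * (\<integral>\<^sup>+u. fw u \<partial>lborel)"
      by (subst nn_integral_cmult) auto
    finally show ?thesis .
  qed
  have cle: "ennreal (1/(pi*C)) \<le> ennreal (2 / C)"
  proof (rule ennreal_leI)
    have "1/(pi*C) = (1/pi) * (1/C)" by simp
    also have "\<dots> \<le> 2 * (1/C)"
      using C0 pi_gt3 by (intro mult_right_mono) (auto simp: divide_le_eq)
    finally show "1/(pi*C) \<le> 2 / C" by simp
  qed
  have "bergman_norm_p 1 \<alpha> (\<lambda>z. F z * indicator \<Omega> z) \<le> ennreal (1/pi) * (ennreal (1/(pi*C)) * \<rho> * (\<integral>\<^sup>+u. fw u \<partial>lborel))"
    unfolding normL by (intro mult_left_mono main) simp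
  also have "\<dots> = ennreal (1/(pi*C)) * \<rho> * (ennreal (1/pi) * (\<integral>\<^sup>+u. fw u \<partial>lborel))"
    by (simp add: mult_ac)
  also have "\<dots> \<le> ennreal (2/C) * \<rho> * (ennreal (1/pi) * (\<integral>\<^sup>+u. fw u \<partial>lborel))"
    by (intro mult_right_mono cle) simp_all
  finally show ?thesis by (simp add: normF C_def \<rho>_def)
qed


end
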